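(* Let $n\geq 2$ be finite. Then $RTA_n=\mathbf{SP}\{\mathfrak{A}_{nk}:k\leq n\}$, i.e. every subdirect product of full transposition set algebras of dimension $n$ is (up to isomorphism) a subalgebra of a direct product of copies of the finitely many algebras $\mathfrak{A}_{nk}$, $k\leq n$, and conversely.
   Context: For a set $U$ and ordinal $\alpha$, the full transposition set algebra of dimension $\alpha$ with base $U$ is $\langle\mathcal{P}({}^\alpha U);\cap,-,S_{ij}\rangle_{i\neq j\in\alpha}$, where $[i,j]$ is the transposition of $\alpha$ swapping $i$ and $j$ and $S_{ij}(X)=\{q\in{}^\alpha U:q\circ[i,j]\in X\}$. $SetTA_\alpha$ is the class of subalgebras of such full algebras, and $RTA_\alpha=\mathbf{SP}\,SetTA_\alpha$ (closure under isomorphic copies of subalgebras and direct products). For $k\leq n$, $\mathfrak{A}_{nk}$ is the full transposition set algebra of dimension $n$ with base $k=\{0,\dots,k-1\}$. *)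

theory Defs
  imports "HOL-Library.FuncSet" "HOL-Combinatorics.Transposition"
begin

text \<open>Algebras of the similarity type of transposition algebras of dimension n:
  a carrier, a binary meet, a complement, and operations S i j (used for i \<noteq> j < n).\<close>
record 'a ta =
  car   :: "'a set"
  meet  :: "'a \<Rightarrow> 'a \<Rightarrow> 'a"
  cmp   :: "'a \<Rightarrow> 'a"
  subst :: "nat \<Rightarrow> nat \<Rightarrow> 'a \<Rightarrow> 'a"

definition is_alg :: "nat \<Rightarrow> 'a ta \<Rightarrow> bool" where
  "is_alg n A \<longleftrightarrow>
     (\<forall>a\<in>car A. \<forall>b\<in>car A. meet A a b \<in> car A) \<and>
     (\<forall>a\<in>car A. cmp A a \<in> car A) \<and>
     (\<forall>i<n. \<forall>j<n. i \<noteq> j \<longrightarrow> (\<forall>a\<in>car A. subst A i j a \<in> car A))"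

definition is_hom :: "nat \<Rightarrow> 'a ta \<Rightarrow> 'b ta \<Rightarrow> ('a \<Rightarrow> 'b) \<Rightarrow> bool" where
  "is_hom n A B h \<longleftrightarrow>
     (\<forall>a\<in>car A. h a \<in> car B) \<and>
     (\<forall>a\<in>car A. \<forall>b\<in>car A. h (meet A a b) = meet B (h a) (h b)) \<and>
     (\<forall>a\<in>car A. h (cmp A a) = cmp B (h a)) \<and>
     (\<forall>i<n. \<forall>j<n. i \<noteq> j \<longrightarrow> (\<forall>a\<in>car A. h (subst A i j a) = subst B i j (h a)))"

definition embeds :: "nat \<Rightarrow> 'a ta \<Rightarrow> 'b ta \<Rightarrow> bool" where
  "embeds n A B \<longleftrightarrow> is_alg n A \<and> (\<exists>h. is_hom n A B h \<and> inj_on h (car A))"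

definition prod_alg :: "'i set \<Rightarrow> ('i \<Rightarrow> 'b ta) \<Rightarrow> ('i \<Rightarrow> 'b) ta" where
  "prod_alg I B =
     \<lparr> car = (\<Pi>\<^sub>E i\<in>I. car (B i)),
       meet = (\<lambda>f g. restrict (\<lambda>i. meet (B i) (f i) (g i)) I),
       cmp = (\<lambda>f. restrict (\<lambda>i. cmp (B i) (f i)) I),
       subst = (\<lambda>k l f. restrict (\<lambda>i. subst (B i) k l (f i)) I) \<rparr>"

text \<open>n-sequences over U, represented as lists of length n with entries in U.\<close>
definition seqs :: "nat \<Rightarrow> 'u set \<Rightarrow> 'u list set" where
  "seqs n U = {q. length q = n \<and> set q \<subseteq> U}"

definition comp_transp :: "'u list \<Rightarrow> nat \<Rightarrow> nat \<Rightarrow> 'u list" where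
  "comp_transp q i j = map (\<lambda>l. q ! transpose i j l) [0..<length q]"

definition set_ta :: "nat \<Rightarrow> 'u set \<Rightarrow> 'u list set set \<Rightarrow> 'u list set ta" where
  "set_ta n U X =
     \<lparr> car = X,
       meet = (\<inter>),
       cmp = (\<lambda>x. seqs n U - x),
       subst = (\<lambda>i j x. {q \<in> seqs n U. comp_transp q i j \<in> x}) \<rparr>"

definition full_ta :: "nat \<Rightarrow> 'u set \<Rightarrow> 'u list set ta" where
  "full_ta n U = set_ta n U (Pow (seqs n U))"

definition A_nk :: "nat \<Rightarrow> nat \<Rightarrow> nat list set ta" where
  "A_nk n k = full_ta n {0..<k}"

text \<open>A \<in> SP SetTA_n, with products indexed by a set of type 'i and bases of type 'u.\<close>
definition in_RTA :: "nat \<Rightarrow> 'a ta \<Rightarrow> 'i itself \<Rightarrow> 'u itself \<Rightarrow> bool" where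
  "in_RTA n A _ _ \<longleftrightarrow>
     (\<exists>(I :: 'i set) (U :: 'i \<Rightarrow> 'u set) (X :: 'i \<Rightarrow> 'u list set set).
        (\<forall>i\<in>I. X i \<subseteq> Pow (seqs n (U i)) \<and> is_alg n (set_ta n (U i) (X i))) \<and>
        embeds n A (prod_alg I (\<lambda>i. set_ta n (U i) (X i))))"

text \<open>A \<in> SP {A_nk : k \<le> n}, with products indexed by a set of type 'i.\<close>
definition in_SP_Ank :: "nat \<Rightarrow> 'a ta \<Rightarrow> 'i itself \<Rightarrow> bool" where
  "in_SP_Ank n A _ \<longleftrightarrow>
     (\<exists>(I :: 'i set) (K :: 'i \<Rightarrow> nat).
        (\<forall>i\<in>I. K i \<le> n) \<and> embeds n A (prod_alg I (\<lambda>i. A_nk n (K i))))"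

end

theory Submission
  imports Defs
begin

lemma hom_comp:
  assumes "is_hom n A B f" "is_hom n B C g"
  shows "is_hom n A C (g \<circ> f)"
  using assms unfolding is_hom_def by auto

lemma hom_proj:
  assumes "i \<in> I"
  shows "is_hom n (prod_alg I B) (B i) (\<lambda>f. f i)"
  using assms unfolding is_hom_def prod_alg_def by auto

lemma hom_prod:
  assumes "\<forall>j\<in>J. is_hom n A (B j) (h j)"
  shows "is_hom n A (prod_alg J B) (\<lambda>c. restrict (\<lambda>j. h j c) J)"
  using assms unfolding is_hom_def prod_alg_def by (auto intro!: ext)

lemma transpose_lt: "i < n \<Longrightarrow> j < n \<Longrightarrow> l < n \<Longrightarrow> transpose i j l < n"
  by (simp add: transpose_def)

lemma comp_transp_map:
  assumes "i < length p" "j < length p"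
  shows "comp_transp (map f p) i j = map f (comp_transp p i j)"
  unfolding comp_transp_def using assms transpose_lt[of i "length p" j]
  by (auto intro!: map_cong)

lemma comp_transp_seqs:
  assumes "p \<in> seqs n V" "i < n" "j < n"
  shows "comp_transp p i j \<in> seqs n V"
  using assms transpose_lt[of i n j] unfolding seqs_def comp_transp_def
  by (auto intro!: nth_mem[THEN subsetD[of "set p" V, rotated]] )

lemma map_nth_seqs:
  assumes "q \<in> seqs n U" "p \<in> seqs n {0..<n}"
  shows "map ((!) q) p \<in> seqs n U"
  using assms unfolding seqs_def by (auto intro!: nth_mem[THEN subsetD[of "set q" U, rotated]])

lemma hom_rel:
  assumes q: "q \<in> seqs n U"
  shows "is_hom n (set_ta n U X) (A_nk n n) (\<lambda>x. {p \<in> seqs n {0..<n}. map ((!) q) p \<in> x})"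
proof -
  have L: "length p = n" if "p \<in> seqs n V" for p V using that by (simp add: seqs_def)
  show ?thesis
    unfolding is_hom_def A_nk_def full_ta_def set_ta_def
    using map_nth_seqs[OF q] comp_transp_seqs
    by (auto simp: comp_transp_map L)
qed

lemma full_alg: "is_alg n (set_ta n U (Pow (seqs n U)))"
  unfolding is_alg_def set_ta_def by auto

theorem theorem3p7:
  fixes n :: nat and A :: "'a ta"
  assumes "n \<ge> 2"
  shows "(in_RTA n A TYPE('i) TYPE('u) \<longrightarrow> in_SP_Ank n A TYPE('a \<times> 'a))
       \<and> (in_SP_Ank n A TYPE('i) \<longrightarrow> in_RTA n A TYPE('i) TYPE(nat))"
proof (intro conjI impI)
  assume "in_SP_Ank n A TYPE('i)"
  then obtain I :: "'i set" and K where "\<forall>i\<in>I. K i \<le> n"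
    and e: "embeds n A (prod_alg I (\<lambda>i. A_nk n (K i)))"
    unfolding in_SP_Ank_def by blast
  show "in_RTA n A TYPE('i) TYPE(nat)"
    unfolding in_RTA_def
    apply (rule exI[of _ I], rule exI[of _ "\<lambda>i. {0..<K i}"],
        rule exI[of _ "\<lambda>i. Pow (seqs n {0..<K i})"])
    using e full_alg unfolding A_nk_def full_ta_def by auto
next
  assume "in_RTA n A TYPE('i) TYPE('u)"
  then obtain I :: "'i set" and U :: "'i \<Rightarrow> 'u set" and X where
    hX: "\<forall>i\<in>I. X i \<subseteq> Pow (seqs n (U i)) \<and> is_alg n (set_ta n (U i) (X i))"
    and e: "embeds n A (prod_alg I (\<lambda>i. set_ta n (U i) (X i)))"
    unfolding in_RTA_def by blast
  then obtain g where alg: "is_alg n A" and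
    hg: "is_hom n A (prod_alg I (\<lambda>i. set_ta n (U i) (X i))) g" and ig: "inj_on g (car A)"
    unfolding embeds_def by blast
  define J where "J = {(a,b). a \<in> car A \<and> b \<in> car A \<and> a \<noteq> b}"
  define P where "P = (\<lambda>(a,b). \<lambda>(i,q). i \<in> I \<and> q \<in> seqs n (U i) \<and> ((q \<in> g a i) \<noteq> (q \<in> g b i)))"
  have exP: "\<exists>iq. P ab iq" if hab: "ab \<in> J" for ab
  proof -
    obtain a b where ab: "ab = (a,b)" "a \<in> car A" "b \<in> car A" "a \<noteq> b"
      using hab unfolding J_def by blast
    have ne: "g a \<noteq> g b" using ig ab inj_on_def by metis
    have ga: "g a \<in> (\<Pi>\<^sub>E i\<in>I. X i)" "g b \<in> (\<Pi>\<^sub>E i\<in>I. X i)"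
      using hg ab unfolding is_hom_def prod_alg_def set_ta_def by auto
    then obtain i where i: "i \<in> I" "g a i \<noteq> g b i"
      using ne by (metis PiE_ext)
    have "g a i \<subseteq> seqs n (U i)" "g b i \<subseteq> seqs n (U i)"
    proof -
      have "g a i \<in> X i" "g b i \<in> X i" using ga i(1) by auto
      then show "g a i \<subseteq> seqs n (U i)" "g b i \<subseteq> seqs n (U i)" using hX i(1) by auto
    qed
    then obtain q where "q \<in> seqs n (U i)" "(q \<in> g a i) \<noteq> (q \<in> g b i)"
      using i(2) by blast
    then show ?thesis using ab i unfolding P_def by auto
  qed
  define sel where "sel = (\<lambda>ab. SOME iq. P ab iq)"
  have selP: "P ab (sel ab)" if "ab \<in> J" for ab
    unfolding sel_def using someI_ex[OF exP[OF that]] .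
  define rel where "rel = (\<lambda>q (x::'u list set). {p \<in> seqs n {0..<n}. map ((!) q) p \<in> x})"
  define h where "h = (\<lambda>ab c. rel (snd (sel ab)) (g c (fst (sel ab))))"
  define H where "H = (\<lambda>c. restrict (\<lambda>j. h j c) J)"
  have hj: "is_hom n A (A_nk n n) (h j)" if "j \<in> J" for j
  proof -
    obtain i q where s: "sel j = (i,q)" by fastforce
    have iq: "i \<in> I" "q \<in> seqs n (U i)" using selP[OF that] s unfolding P_def
      by (auto split: prod.splits)
    have "is_hom n A (A_nk n n) ((rel q \<circ> (\<lambda>f. f i)) \<circ> g)"
      apply (rule hom_comp[OF hg])
      apply (rule hom_comp[OF hom_proj[OF iq(1)]])
      unfolding rel_def using hom_rel[OF iq(2)] by simp
    then show ?thesis unfolding h_def s by (simp add: comp_def)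
  qed
  have hH: "is_hom n A (prod_alg J (\<lambda>_. A_nk n n)) H"
    unfolding H_def by (rule hom_prod) (use hj in blast)
  have iH: "inj_on H (car A)"
  proof (rule inj_onI, rule ccontr)
    fix a b assume ab: "a \<in> car A" "b \<in> car A" "H a = H b" "a \<noteq> b"
    then have j: "(a,b) \<in> J" unfolding J_def by auto
    obtain i q where s: "sel (a,b) = (i,q)" by fastforce
    have iq: "i \<in> I" "q \<in> seqs n (U i)" "(q \<in> g a i) \<noteq> (q \<in> g b i)"
      using selP[OF j] s unfolding P_def by auto
    have "h (a,b) a = h (a,b) b" using ab(3) j unfolding H_def by (metis restrict_apply')
    moreover have "[0..<n] \<in> seqs n {0..<n}" by (simp add: seqs_def)
    moreover have "map ((!) q) [0..<n] = q" using iq(2) unfolding seqs_def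
      by (clarsimp simp: map_nth)
    ultimately have "([0..<n] \<in> rel q (g a i)) = ([0..<n] \<in> rel q (g b i))"
      "[0..<n] \<in> seqs n {0..<n}" "map ((!) q) [0..<n] = q"
      unfolding h_def s by auto
    then show False using iq(3) unfolding rel_def by simp
  qed
  show "in_SP_Ank n A TYPE('a \<times> 'a)"
    unfolding in_SP_Ank_def embeds_def
    using alg hH iH by (intro exI[of _ J] exI[of _ "\<lambda>_. n"]) auto
qed

end
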